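(* Let $\Psi=\{S_j\mid j\in J\}$ be a family of formal power series $S_j:\Sigma^*\to\mathbb{R}^p$ indexed by a finite set $J$. (i) If $\Psi$ admits a stable representation, then $\Psi$ is square summable. (ii) If $\Psi$ is square summable, then every minimal representation of $\Psi$ is stable.
   Context: $\Sigma$ is a finite alphabet, $\Sigma^*$ the set of finite words over $\Sigma$ (including the empty word $\epsilon$). For matrices $A_\sigma$ ($\sigma\in\Sigma$) and $w=\sigma_1\cdots\sigma_k$, write $A_w=A_{\sigma_k}\cdots A_{\sigma_1}$, $A_\epsilon=I$. A representation of $\Psi$ is a tuple $R=(\mathbb{R}^n,\{A_\sigma\}_{\sigma\in\Sigma},B,C)$ with $A_\sigma\in\mathbb{R}^{n\times n}$, $C\in\mathbb{R}^{p\times n}$, $B=\{B_j\in\mathbb{R}^n\mid j\in J\}$, such that $S_j(w)=CA_wB_j$ for all $j\in J$, $w\in\Sigma^*$; its dimension is $n$. $\Psi$ is rational if it has a representation. A representation is minimal if no representation of $\Psi$ has smaller dimension. $R$ is stable if all eigenvalues of $\sum_{\sigma\in\Sigma}A_\sigma^T\otimes A_\sigma^T$ have modulus $<1$. $\Psi$ is square summable if $\sum_{w\in\Sigma^*}\|S_j(w)\|_2^2<\infty$ for every $j\in J$. *)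

theory Defs
  imports "HOL-Analysis.Analysis" "Jordan_Normal_Form.Char_Poly"
begin

definition kron :: "'b::times mat \<Rightarrow> 'b mat \<Rightarrow> 'b mat" where
  "kron X Y = mat (dim_row X * dim_row Y) (dim_col X * dim_col Y)
     (\<lambda>(r, c). X $$ (r div dim_row Y, c div dim_col Y) * Y $$ (r mod dim_row Y, c mod dim_col Y))"

text \<open>Word matrix: for w = s1 ... sk, A_w = A_sk * ... * A_s1, A_epsilon = I.\<close>
fun word_mat :: "nat \<Rightarrow> ('a \<Rightarrow> real mat) \<Rightarrow> 'a list \<Rightarrow> real mat" where
  "word_mat n A [] = 1\<^sub>m n"
| "word_mat n A (s # w) = word_mat n A w * A s"

definition is_representation ::
  "'j set \<Rightarrow> nat \<Rightarrow> ('j \<Rightarrow> 'a list \<Rightarrow> real vec) \<Rightarrow>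
   nat \<Rightarrow> ('a \<Rightarrow> real mat) \<Rightarrow> ('j \<Rightarrow> real vec) \<Rightarrow> real mat \<Rightarrow> bool" where
  "is_representation J p S n A B C \<longleftrightarrow>
     (\<forall>s. A s \<in> carrier_mat n n) \<and>
     (\<forall>j\<in>J. B j \<in> carrier_vec n) \<and>
     C \<in> carrier_mat p n \<and>
     (\<forall>j\<in>J. \<forall>w. S j w = mult_mat_vec C (mult_mat_vec (word_mat n A w) (B j)))"

definition rational_family ::
  "'j set \<Rightarrow> nat \<Rightarrow> ('j \<Rightarrow> 'a list \<Rightarrow> real vec) \<Rightarrow> bool" where
  "rational_family J p S \<longleftrightarrow> (\<exists>n A B C. is_representation J p S n A B C)"

definition minimal_representation ::
  "'j set \<Rightarrow> nat \<Rightarrow> ('j \<Rightarrow> 'a list \<Rightarrow> real vec) \<Rightarrow>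
   nat \<Rightarrow> ('a \<Rightarrow> real mat) \<Rightarrow> ('j \<Rightarrow> real vec) \<Rightarrow> real mat \<Rightarrow> bool" where
  "minimal_representation J p S n A B C \<longleftrightarrow>
     is_representation J p S n A B C \<and>
     (\<forall>n' A' B' C'. is_representation J p S n' A' B' C' \<longrightarrow> n \<le> n')"

definition stab_mat :: "nat \<Rightarrow> ('a::finite \<Rightarrow> real mat) \<Rightarrow> real mat" where
  "stab_mat n A = mat (n * n) (n * n)
     (\<lambda>rc. \<Sum>s\<in>UNIV. kron (transpose_mat (A s)) (transpose_mat (A s)) $$ rc)"

definition stable_rep :: "nat \<Rightarrow> ('a::finite \<Rightarrow> real mat) \<Rightarrow> bool" where
  "stable_rep n A \<longleftrightarrow>
     (\<forall>k::complex. eigenvalue (map_mat complex_of_real (stab_mat n A)) k \<longrightarrow> cmod k < 1)"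

definition sq_norm2 :: "real vec \<Rightarrow> real" where
  "sq_norm2 v = (\<Sum>i<dim_vec v. (v $ i)\<^sup>2)"

definition square_summable :: "'j set \<Rightarrow> ('j \<Rightarrow> 'a list \<Rightarrow> real vec) \<Rightarrow> bool" where
  "square_summable J S \<longleftrightarrow> (\<forall>j\<in>J. (\<lambda>w. sq_norm2 (S j w)) summable_on UNIV)"

end

theory Submission
  imports Defs "Jordan_Normal_Form.Spectral_Radius" "Jordan_Normal_Form.VS_Connect"
begin
unbundle no vec_syntax



context vec_space begin
lemma small_gen_list:
  assumes X: "X \<subseteq> carrier_vec n" and ns: "\<not> carrier_vec n \<subseteq> span X"
  shows "\<exists>bs. set bs \<subseteq> X \<and> length bs < n \<and> X \<subseteq> span (set bs)"
proof -
  let ?P = "\<lambda>S. S \<subseteq> X \<and> lin_indpt S"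
  have bnd: "\<And>A. ?P A \<Longrightarrow> finite A \<and> card A \<le> n"
    using li_le_dim[OF fin_dim] X dim_is_n by auto
  have "?P {}" using X
    unfolding lin_dep_def by auto
  from maximal_exists[of ?P, OF bnd this] obtain \<beta> where fb: "finite \<beta>" and mx: "maximal \<beta> ?P" by blast
  from mx have bX: "\<beta> \<subseteq> X" and li: "lin_indpt \<beta>" unfolding maximal_def by auto
  have bC: "\<beta> \<subseteq> carrier_vec n" using bX X by auto
  have Xs: "X \<subseteq> span \<beta>"
  proof
    fix x assume x: "x \<in> X"
    show "x \<in> span \<beta>"
    proof (rule ccontr)
      assume nx: "x \<notin> span \<beta>"
      hence xb: "x \<notin> \<beta>" using in_own_span[OF bC] by auto
      have "lin_indpt (\<beta> \<union> {x})" using lin_dep_iff_in_span[OF bC li _ xb] x X nx by auto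
      hence "\<beta> \<union> {x} = \<beta>" using mx x bX unfolding maximal_def by blast
      thus False using xb by auto
    qed
  qed
  have cb: "card \<beta> < n"
  proof (rule ccontr)
    assume "\<not> card \<beta> < n"
    hence "card \<beta> \<ge> dim" using dim_is_n by auto
    from dim_li_is_basis[OF fin_dim fb bC li this] have "span \<beta> = carrier_vec n" unfolding basis_def by auto
    moreover have "span \<beta> \<subseteq> span X" using span_is_monotone[OF bX] .
    ultimately show False using ns by auto
  qed
  obtain bs where "set bs = \<beta>" "distinct bs" using finite_distinct_list[OF fb] by blast
  thus ?thesis using bX cb Xs distinct_card by fastforce
qed
end
context vec_space begin
lemma reduce_inv:
  fixes T :: "'b \<Rightarrow> 'a mat"
  assumes T: "\<And>s. T s \<in> carrier_mat n n" and X: "X \<subseteq> carrier_vec n"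
   and inv: "\<And>x s. x \<in> X \<Longrightarrow> T s *\<^sub>v x \<in> X"
   and ns: "\<not> carrier_vec n \<subseteq> span X"
  shows "\<exists>m P T'. m < n \<and> P \<in> carrier_mat n m \<and> (\<forall>s. T' s \<in> carrier_mat m m \<and> T s * P = P * T' s)
      \<and> (\<forall>x\<in>X. \<exists>c\<in>carrier_vec m. x = P *\<^sub>v c)"
proof -
  from small_gen_list[OF X ns] obtain bs where bX: "set bs \<subseteq> X" and len: "length bs < n"
    and Xs: "X \<subseteq> span (set bs)" by blast
  define m where "m = length bs"
  define P where "P = mat_of_cols n bs"
  have bC: "set bs \<subseteq> carrier_vec n" using bX X by auto
  have P: "P \<in> carrier_mat n m" unfolding P_def m_def by auto
  have coord: "\<exists>c\<in>carrier_vec m. x = P *\<^sub>v c" if x: "x \<in> X" for x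
  proof -
    have "x \<in> span_list bs" using Xs x span_list_as_span[OF bC] by auto
    then obtain c where "x = lincomb_list c bs" unfolding span_list_def by auto
    also have "\<dots> = P *\<^sub>v vec m c" unfolding P_def m_def
      by (rule lincomb_list_as_mat_mult, insert bC, auto)
    finally show ?thesis by (intro bexI[of _ "vec m c"], auto)
  qed
  define cd where "cd x = (SOME c. c \<in> carrier_vec m \<and> x = P *\<^sub>v c)" for x
  have cd: "cd x \<in> carrier_vec m \<and> x = P *\<^sub>v cd x" if "x \<in> X" for x
    unfolding cd_def by (rule someI_ex, insert coord[OF that], auto)
  define T' where "T' s = mat m m (\<lambda>(i,k). cd (T s *\<^sub>v bs ! k) $ i)" for s
  have T'c: "T' s \<in> carrier_mat m m" for s unfolding T'_def by auto
  have colT': "col (T' s) k = cd (T s *\<^sub>v bs ! k)" if k: "k < m" for s k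
  proof -
    have "bs ! k \<in> X" using bX k m_def by auto
    hence "T s *\<^sub>v bs ! k \<in> X" by (rule inv)
    from cd[OF this] have c: "cd (T s *\<^sub>v bs ! k) \<in> carrier_vec m" by auto
    show ?thesis by (rule eq_vecI, insert c k, auto simp: T'_def)
  qed
  have comm: "T s * P = P * T' s" for s
  proof (rule eq_matI)
    fix i k assume i: "i < dim_row (P * T' s)" and k: "k < dim_col (P * T' s)"
    from i k P T'c[of s] have i: "i < n" and k: "k < m" by auto
    have bk: "bs ! k \<in> X" using bX k m_def by auto
    hence Tb: "T s *\<^sub>v bs ! k \<in> X" by (rule inv)
    have colP: "col P k = bs ! k" unfolding P_def using k m_def bC
      by (subst col_mat_of_cols, auto)
    have "(T s * P) $$ (i,k) = (T s *\<^sub>v col P k) $ i" using i k T[of s] P by auto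
    also have "\<dots> = (T s *\<^sub>v bs ! k) $ i" unfolding colP ..
    also have "\<dots> = (P *\<^sub>v cd (T s *\<^sub>v bs ! k)) $ i" using cd[OF Tb] by metis
    also have "\<dots> = (P *\<^sub>v col (T' s) k) $ i" using colT'[OF k] by simp
    also have "\<dots> = (P * T' s) $$ (i,k)" using i k P T'c[of s] by auto
    finally show "(T s * P) $$ (i,k) = (P * T' s) $$ (i,k)" .
  qed (insert T[of s] P T'c[of s], auto)
  show ?thesis
    by (rule exI[of _ m], rule exI[of _ P], rule exI[of _ T'], insert len m_def P T'c comm coord, auto)
qed
end

lemma word_mat_carrier: "(\<And>s. A s \<in> carrier_mat n n) \<Longrightarrow> word_mat n A w \<in> carrier_mat n n"
  by (induct w, auto)

lemma word_mat_append: "(\<And>s. A s \<in> carrier_mat n n) \<Longrightarrow> word_mat n A (u @ v) = word_mat n A v * word_mat n A u"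
proof (induct u)
  case Nil thus ?case using word_mat_carrier[of A n v] by simp
next
  case (Cons s u)
  have "word_mat n A ((s # u) @ v) = word_mat n A (u @ v) * A s" by simp
  also have "\<dots> = word_mat n A v * word_mat n A u * A s" using Cons by simp
  also have "\<dots> = word_mat n A v * (word_mat n A u * A s)"
    by (rule assoc_mult_mat[of _ n n _ n _ n], insert word_mat_carrier[of A n] Cons(2), auto)
  finally show ?case by simp
qed

lemma word_mat_snoc: "(\<And>s. A s \<in> carrier_mat n n) \<Longrightarrow> word_mat n A (w @ [s]) = A s * word_mat n A w"
  using word_mat_append[of A n w "[s]"] left_mult_one_mat[of "A s" n n] by simp

lemma word_mat_conj:
  assumes A: "\<And>s. A s \<in> carrier_mat n n" and A': "\<And>s. A' s \<in> carrier_mat m m"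
  and P: "P \<in> carrier_mat n m" and c: "\<And>s. A s * P = P * A' s"
  shows "word_mat n A w * P = P * word_mat m A' w"
proof (induct w)
  case Nil thus ?case using P by simp
next
  case (Cons s w)
  have W: "word_mat n A w \<in> carrier_mat n n" "word_mat m A' w \<in> carrier_mat m m"
    using word_mat_carrier[of A n, OF A] word_mat_carrier[of A' m, OF A'] by auto
  note As = A[of s] A'[of s]
  have "word_mat n A (s # w) * P = word_mat n A w * (A s * P)"
    using assoc_mult_mat[OF W(1) As(1) P] by simp
  also have "\<dots> = word_mat n A w * (P * A' s)" unfolding c ..
  also have "\<dots> = (word_mat n A w * P) * A' s"
    using assoc_mult_mat[OF W(1) P As(2)] by simp
  also have "\<dots> = P * (word_mat m A' w * A' s)" unfolding Cons
    using assoc_mult_mat[OF P W(2) As(2)] by simp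
  finally show ?case by simp
qed

lemma word_mat_conj_dual:
  assumes A: "\<And>s. A s \<in> carrier_mat n n" and A': "\<And>s. A' s \<in> carrier_mat m m"
  and Q: "Q \<in> carrier_mat m n" and c: "\<And>s. Q * A s = A' s * Q"
  shows "Q * word_mat n A w = word_mat m A' w * Q"
proof (induct w)
  case Nil thus ?case using Q by simp
next
  case (Cons s w)
  have W: "word_mat n A w \<in> carrier_mat n n" "word_mat m A' w \<in> carrier_mat m m"
    using word_mat_carrier[of A n, OF A] word_mat_carrier[of A' m, OF A'] by auto
  note As = A[of s] A'[of s]
  have "Q * word_mat n A (s # w) = (Q * word_mat n A w) * A s"
    using assoc_mult_mat[OF Q W(1) As(1)] by simp
  also have "\<dots> = word_mat m A' w * (Q * A s)" unfolding Cons
    using assoc_mult_mat[OF W(2) Q As(1)] by simp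
  also have "\<dots> = word_mat m A' w * (A' s * Q)" unfolding c ..
  also have "\<dots> = (word_mat m A' w * A' s) * Q"
    using assoc_mult_mat[OF W(2) As(2) Q] by simp
  finally show ?case by simp
qed


context vec_space begin
lemma span_entries:
  assumes X: "X \<subseteq> carrier_vec n" and x: "x \<in> span X"
  shows "\<exists>F a. finite F \<and> F \<subseteq> X \<and> (\<forall>i<n. x $ i = (\<Sum>v\<in>F. a v * v $ i))"
proof -
  from in_spanE[OF x] obtain a F where "x = lincomb a F" "finite F" "F \<subseteq> X" by blast
  thus ?thesis using lincomb_index[of _ F a] X by (intro exI[of _ F] exI[of _ a], auto)
qed
end

lemma min_reach:
  assumes min: "minimal_representation J p S n A B C" and x: "x \<in> carrier_vec n"
  shows "\<exists>F a. finite F \<and> F \<subseteq> {word_mat n A u *\<^sub>v B j | u j. j \<in> J} \<and> (\<forall>i<n. x $ i = (\<Sum>v\<in>F. a v * v $ i))"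
proof -
  interpret V: vec_space "TYPE(real)" n .
  define X where "X = {word_mat n A u *\<^sub>v B j | u j. j \<in> J}"
  from min have rep: "is_representation J p S n A B C" and
    mn: "\<And>n' A' B' C'. is_representation J p S n' A' B' C' \<Longrightarrow> n \<le> n'"
    unfolding minimal_representation_def by auto
  from rep have A: "\<And>s. A s \<in> carrier_mat n n" and B: "\<And>j. j \<in> J \<Longrightarrow> B j \<in> carrier_vec n"
    and C: "C \<in> carrier_mat p n" and S: "\<And>j w. j \<in> J \<Longrightarrow> S j w = C *\<^sub>v (word_mat n A w *\<^sub>v B j)"
    unfolding is_representation_def by auto
  note W = word_mat_carrier[of A n, OF A]
  have XC: "X \<subseteq> carrier_vec n" unfolding X_def using W B by (auto intro!: mult_mat_vec_carrier)
  have inv: "A s *\<^sub>v x \<in> X" if "x \<in> X" for x s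
  proof -
    from that obtain u j where j: "j \<in> J" and xu: "x = word_mat n A u *\<^sub>v B j" unfolding X_def by auto
    have "A s *\<^sub>v x = (A s * word_mat n A u) *\<^sub>v B j" unfolding xu
      using A[of s] W[of u] B[OF j] by (simp add: assoc_mult_mat_vec)
    also have "\<dots> = word_mat n A (u @ [s]) *\<^sub>v B j" using word_mat_snoc[of A n, OF A] by simp
    finally show ?thesis unfolding X_def using j by blast
  qed
  have "carrier_vec n \<subseteq> V.span X"
  proof (rule ccontr)
    assume "\<not> ?thesis"
    from V.reduce_inv[of A X, OF A XC inv this] obtain m P A' where
      m: "m < n" and P: "P \<in> carrier_mat n m" and A': "\<And>s. A' s \<in> carrier_mat m m"
      and c: "\<And>s. A s * P = P * A' s" and co: "\<And>x. x \<in> X \<Longrightarrow> \<exists>c\<in>carrier_vec m. x = P *\<^sub>v c"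
      by blast
    have "B j \<in> X" if "j \<in> J" for j unfolding X_def using that
      by (intro CollectI exI[of _ "[]"] exI[of _ j], insert B[OF that], auto)
    hence "\<forall>j\<in>J. \<exists>c. c \<in> carrier_vec m \<and> B j = P *\<^sub>v c" using co by blast
    then obtain B' where B': "\<And>j. j \<in> J \<Longrightarrow> B' j \<in> carrier_vec m \<and> B j = P *\<^sub>v B' j"
      by metis
    have "is_representation J p S m A' B' (C * P)"
      unfolding is_representation_def
    proof (intro conjI ballI allI)
      show "A' s \<in> carrier_mat m m" for s by (rule A')
      show "B' j \<in> carrier_vec m" if "j \<in> J" for j using B'[OF that] by auto
      show "C * P \<in> carrier_mat p m" using C P by auto
      fix j w assume j: "j \<in> J"
      have W': "word_mat m A' w \<in> carrier_mat m m" using word_mat_carrier[of A' m, OF A'] .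
      have "S j w = C *\<^sub>v (word_mat n A w *\<^sub>v (P *\<^sub>v B' j))" using S[OF j] B'[OF j] by simp
      also have "\<dots> = C *\<^sub>v ((word_mat n A w * P) *\<^sub>v B' j)"
        using W[of w] P B'[OF j] by (simp add: assoc_mult_mat_vec)
      also have "\<dots> = C *\<^sub>v ((P * word_mat m A' w) *\<^sub>v B' j)"
        unfolding word_mat_conj[of A n A' m P, OF A A' P c] ..
      also have "\<dots> = (C * P) *\<^sub>v (word_mat m A' w *\<^sub>v B' j)"
        using W' P B'[OF j] C by (simp add: assoc_mult_mat_vec)
      finally show "S j w = (C * P) *\<^sub>v (word_mat m A' w *\<^sub>v B' j)" .
    qed
    from mn[OF this] m show False by auto
  qed
  with x have "x \<in> V.span X" by auto
  from V.span_entries[OF XC this] show ?thesis unfolding X_def .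
qed


lemma row_mult_transpose:
  assumes X: "(X :: 'a :: comm_ring_1 mat) \<in> carrier_mat a b" and Y: "Y \<in> carrier_mat b c" and i: "i < a"
  shows "row (X * Y) i = transpose_mat Y *\<^sub>v row X i"
proof (rule eq_vecI)
  fix k assume "k < dim_vec (transpose_mat Y *\<^sub>v Matrix.row X i)"
  hence k: "k < c" using Y by auto
  have "Matrix.row X i \<bullet> col Y k = col Y k \<bullet> Matrix.row X i"
    by (rule comm_scalar_prod[of _ b], insert X Y k, auto)
  thus "Matrix.row (X * Y) i $ k = (transpose_mat Y *\<^sub>v Matrix.row X i) $ k" using X Y i k by auto
qed (insert X Y, auto)

lemma min_obs:
  assumes min: "minimal_representation J p S n A B C" and x: "x \<in> carrier_vec n"
  shows "\<exists>F a. finite F \<and> F \<subseteq> {Matrix.row (C * word_mat n A v) i | v i. i < p} \<and> (\<forall>l<n. x $ l = (\<Sum>y\<in>F. a y * y $ l))"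
proof -
  interpret V: vec_space "TYPE(real)" n .
  define X where "X = {Matrix.row (C * word_mat n A v) i | v i. i < p}"
  from min have rep: "is_representation J p S n A B C" and
    mn: "\<And>n' A' B' C'. is_representation J p S n' A' B' C' \<Longrightarrow> n \<le> n'"
    unfolding minimal_representation_def by auto
  from rep have A: "\<And>s. A s \<in> carrier_mat n n" and B: "\<And>j. j \<in> J \<Longrightarrow> B j \<in> carrier_vec n"
    and C: "C \<in> carrier_mat p n" and S: "\<And>j w. j \<in> J \<Longrightarrow> S j w = C *\<^sub>v (word_mat n A w *\<^sub>v B j)"
    unfolding is_representation_def by auto
  note W = word_mat_carrier[of A n, OF A]
  have AT: "\<And>s. transpose_mat (A s) \<in> carrier_mat n n" using A by auto
  have XC: "X \<subseteq> carrier_vec n" unfolding X_def using W C by (auto intro!: row_carrier)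
  have inv: "transpose_mat (A s) *\<^sub>v x \<in> X" if "x \<in> X" for x s
  proof -
    from that obtain v i where i: "i < p" and xu: "x = row (C * word_mat n A v) i" unfolding X_def by auto
    have "transpose_mat (A s) *\<^sub>v x = row (C * word_mat n A v * A s) i" unfolding xu
      using A[of s] W[of v] C i by (subst row_mult_transpose[of _ p n _ n], auto)
    also have "\<dots> = row (C * word_mat n A (s # v)) i"
      using A[of s] W[of v] C by (simp add: assoc_mult_mat[of _ p n _ n _ n])
    finally show ?thesis unfolding X_def using i by blast
  qed
  have "carrier_vec n \<subseteq> V.span X"
  proof (rule ccontr)
    assume "\<not> ?thesis"
    from V.reduce_inv[of "\<lambda>s. transpose_mat (A s)" X, OF AT XC inv this] obtain m P T' where
      m: "m < n" and P: "P \<in> carrier_mat n m" and T': "\<And>s. T' s \<in> carrier_mat m m"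
      and c: "\<And>s. transpose_mat (A s) * P = P * T' s" and co: "\<And>x. x \<in> X \<Longrightarrow> \<exists>c\<in>carrier_vec m. x = P *\<^sub>v c"
      by blast
    define Q where "Q = transpose_mat P"
    define A' where "A' s = transpose_mat (T' s)" for s
    have Q: "Q \<in> carrier_mat m n" unfolding Q_def using P by auto
    have A': "\<And>s. A' s \<in> carrier_mat m m" unfolding A'_def using T' by auto
    have cQ: "Q * A s = A' s * Q" for s
    proof -
      have "Q * A s = transpose_mat (transpose_mat (A s) * P)" unfolding Q_def
        using P A[of s] by (simp add: transpose_mult[of _ n n _ m])
      also have "\<dots> = A' s * Q" unfolding c A'_def Q_def
        using P T'[of s] by (simp add: transpose_mult[of _ n m _ m])
      finally show ?thesis .
    qed
    have "row C i \<in> X" if "i < p" for i unfolding X_def using that C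
      by (intro CollectI exI[of _ "[]"] exI[of _ i], auto)
    hence "\<forall>i<p. \<exists>c. c \<in> carrier_vec m \<and> row C i = P *\<^sub>v c" using co by blast
    then obtain cs where cs: "\<And>i. i < p \<Longrightarrow> cs i \<in> carrier_vec m \<and> row C i = P *\<^sub>v cs i"
      by metis
    define C' where "C' = mat p m (\<lambda>(i,k). cs i $ k)"
    have C': "C' \<in> carrier_mat p m" unfolding C'_def by auto
    have CC: "C = C' * Q"
    proof (rule eq_matI)
      fix i l assume i: "i < dim_row (C' * Q)" and l: "l < dim_col (C' * Q)"
      hence i: "i < p" and l: "l < n" using C' Q by auto
      have rC': "row C' i = cs i" using cs[OF i] i unfolding C'_def by (intro eq_vecI, auto)
      have "C $$ (i,l) = row C i $ l" using C i l by auto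
      also have "\<dots> = row P l \<bullet> cs i" using cs[OF i] P l by auto
      also have "\<dots> = cs i \<bullet> col Q l" unfolding Q_def using P l cs[OF i]
        by (auto simp: comm_scalar_prod[of _ m])
      also have "\<dots> = (C' * Q) $$ (i,l)" using rC' i l C' Q by auto
      finally show "C $$ (i,l) = (C' * Q) $$ (i,l)" .
    qed (insert C C' Q, auto)
    have "is_representation J p S m A' (\<lambda>j. Q *\<^sub>v B j) C'"
      unfolding is_representation_def
    proof (intro conjI ballI allI)
      show "A' s \<in> carrier_mat m m" for s by (rule A')
      show "Q *\<^sub>v B j \<in> carrier_vec m" if "j \<in> J" for j using Q B[OF that] by (auto intro!: mult_mat_vec_carrier)
      show "C' \<in> carrier_mat p m" by (rule C')
      fix j w assume j: "j \<in> J"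
      have W': "word_mat m A' w \<in> carrier_mat m m" using word_mat_carrier[of A' m, OF A'] .
      have "S j w = (C' * Q) *\<^sub>v (word_mat n A w *\<^sub>v B j)" using S[OF j] CC by simp
      also have "\<dots> = C' *\<^sub>v ((Q * word_mat n A w) *\<^sub>v B j)"
        using W[of w] Q C' B[OF j] by (simp add: assoc_mult_mat_vec)
      also have "\<dots> = C' *\<^sub>v ((word_mat m A' w * Q) *\<^sub>v B j)"
        unfolding word_mat_conj_dual[of A n A' m Q, OF A A' Q cQ] ..
      also have "\<dots> = C' *\<^sub>v (word_mat m A' w *\<^sub>v (Q *\<^sub>v B j))"
        using W' Q B[OF j] C' by (simp add: assoc_mult_mat_vec)
      finally show "S j w = C' *\<^sub>v (word_mat m A' w *\<^sub>v (Q *\<^sub>v B j))" .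
    qed
    from mn[OF this] m show False by auto
  qed
  with x have "x \<in> V.span X" by auto
  from V.span_entries[OF XC this] show ?thesis unfolding X_def .
qed






abbreviation sqs :: "('a list \<Rightarrow> real) \<Rightarrow> bool" where
  "sqs f \<equiv> (\<lambda>w. (f w)\<^sup>2) summable_on UNIV"

lemma sum_summable_on:
  assumes "finite F" "\<And>v. v \<in> F \<Longrightarrow> g v summable_on A"
  shows "(\<lambda>w. \<Sum>v\<in>F. (g v w :: real)) summable_on A"
  using assms by (induct F rule: finite_induct, auto intro!: summable_on_add)

lemma sqs_add:
  assumes "sqs f" "sqs g"
  shows "sqs (\<lambda>w. c * f w + g w)"
proof (rule summable_on_comparison_test)
  show "(\<lambda>w. 2 * c\<^sup>2 * (f w)\<^sup>2 + 2 * (g w)\<^sup>2) summable_on UNIV"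
    using assms by (intro summable_on_add summable_on_cmult_right, auto)
  fix w
  have "2 * (c * f w)\<^sup>2 + 2 * (g w)\<^sup>2 - (c * f w + g w)\<^sup>2 = (c * f w - g w)\<^sup>2"
    by (simp add: power2_eq_square algebra_simps)
  hence "(c * f w + g w)\<^sup>2 \<le> 2 * (c * f w)\<^sup>2 + 2 * (g w)\<^sup>2"
    using zero_le_power2[of "c * f w - g w"] by linarith
  thus "(c * f w + g w)\<^sup>2 \<le> 2 * c\<^sup>2 * (f w)\<^sup>2 + 2 * (g w)\<^sup>2" by (simp add: power_mult_distrib)
qed auto

lemma sqs_lin:
  assumes "finite F" "\<And>v. v \<in> F \<Longrightarrow> sqs (g v)"
  shows "sqs (\<lambda>w. \<Sum>v\<in>F. a v * g v w)"
  using assms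
proof (induct F rule: finite_induct)
  case empty thus ?case by simp
next
  case (insert x F)
  have "sqs (\<lambda>w. a x * g x w + (\<Sum>v\<in>F. a v * g v w))"
    by (rule sqs_add, insert insert, auto)
  thus ?case using insert by simp
qed

definition Qf :: "nat \<Rightarrow> ('a \<Rightarrow> real mat) \<Rightarrow> real vec \<Rightarrow> real vec \<Rightarrow> 'a list \<Rightarrow> real" where
  "Qf n A x y w = (\<Sum>i<n. \<Sum>l<n. x $ i * word_mat n A w $$ (i,l) * y $ l)"

lemma Qf_scalar:
  assumes A: "\<And>s. A s \<in> carrier_mat n n" and x: "x \<in> carrier_vec n" and y: "y \<in> carrier_vec n"
  shows "Qf n A x y w = x \<bullet> (word_mat n A w *\<^sub>v y)"
proof -
  have W: "word_mat n A w \<in> carrier_mat n n" using word_mat_carrier[of A n, OF A] .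
  show ?thesis unfolding Qf_def scalar_prod_def using W x y
    by (auto simp: atLeast0LessThan sum_distrib_left mult.assoc scalar_prod_def intro!: sum.cong)
qed

lemma Qf_lin_right:
  assumes y: "\<forall>l<n. y $ l = (\<Sum>v\<in>F. a v * v $ l)"
  shows "Qf n A x y w = (\<Sum>v\<in>F. a v * Qf n A x v w)"
proof -
  have e: "c * (\<Sum>v\<in>F. a v * v $ l) = (\<Sum>v\<in>F. a v * (c * v $ l))" for c :: real and l
    by (simp add: sum_distrib_left mult.left_commute)
  have "Qf n A x y w = (\<Sum>i<n. \<Sum>l<n. \<Sum>v\<in>F. a v * (x $ i * word_mat n A w $$ (i,l) * v $ l))"
    unfolding Qf_def using y e by (intro sum.cong refl, simp)
  also have "\<dots> = (\<Sum>v\<in>F. \<Sum>i<n. \<Sum>l<n. a v * (x $ i * word_mat n A w $$ (i,l) * v $ l))"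
    by (subst sum.swap, rule sum.cong[OF refl], rule sum.swap)
  also have "\<dots> = (\<Sum>v\<in>F. a v * Qf n A x v w)"
    unfolding Qf_def by (simp add: sum_distrib_left)
  finally show ?thesis .
qed

lemma Qf_lin_left:
  assumes x: "\<forall>l<n. x $ l = (\<Sum>v\<in>F. a v * v $ l)"
  shows "Qf n A x y w = (\<Sum>v\<in>F. a v * Qf n A v y w)"
proof -
  have e: "(\<Sum>v\<in>F. a v * v $ i) * c = (\<Sum>v\<in>F. a v * (v $ i * c))" for c :: real and i
    by (simp add: sum_distrib_right mult.assoc)
  have "Qf n A x y w = (\<Sum>i<n. \<Sum>l<n. \<Sum>v\<in>F. a v * (v $ i * word_mat n A w $$ (i,l) * y $ l))"
    unfolding Qf_def using x by (intro sum.cong refl, simp add: sum_distrib_right mult.assoc)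
  also have "\<dots> = (\<Sum>v\<in>F. \<Sum>i<n. \<Sum>l<n. a v * (v $ i * word_mat n A w $$ (i,l) * y $ l))"
    by (subst sum.swap, rule sum.cong[OF refl], rule sum.swap)
  also have "\<dots> = (\<Sum>v\<in>F. a v * Qf n A v y w)"
    unfolding Qf_def by (simp add: sum_distrib_left)
  finally show ?thesis .
qed

lemma delta_sum_right: "k < (n::nat) \<Longrightarrow> (\<Sum>l<n. (c l :: real) * (if l = k then 1 else 0)) = c k"
proof -
  assume k: "k < n"
  have "(\<Sum>l<n. (c l :: real) * (if l = k then 1 else 0)) = (\<Sum>l<n. if l = k then c l else 0)"
    by (rule sum.cong, auto)
  also have "\<dots> = c k" using k by (subst sum.delta, auto)
  finally show ?thesis .
qed

lemma delta_sum_left: "k < (n::nat) \<Longrightarrow> (\<Sum>l<n. (if l = k then 1 else 0) * (c l :: real)) = c k"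
  using delta_sum_right[of k n c] by (simp add: mult.commute)

lemma Qf_unit:
  assumes i: "i < n" and k: "k < n"
  shows "Qf n A (unit_vec n i) (unit_vec n k) w = word_mat n A w $$ (i,k)"
proof -
  have "Qf n A (unit_vec n i) (unit_vec n k) w = (\<Sum>i'<n. (if i' = i then 1 else 0) * (\<Sum>l<n. word_mat n A w $$ (i',l) * (if l = k then 1 else 0)))"
    unfolding Qf_def by (intro sum.cong refl, auto simp: unit_vec_def sum_distrib_left mult.assoc intro!: sum.cong)
  also have "\<dots> = (\<Sum>i'<n. (if i' = i then 1 else 0) * word_mat n A w $$ (i',k))"
    using delta_sum_right[OF k] by simp
  also have "\<dots> = word_mat n A w $$ (i,k)" by (rule delta_sum_left[OF i])
  finally show ?thesis .
qed


lemma sqs_cong: "sqs f \<Longrightarrow> (\<And>w. g w = f w) \<Longrightarrow> sqs g"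
  by (metis ext)

lemma min_summable:
  assumes min: "minimal_representation J p S n A B C" and ss: "square_summable J S"
  and i: "i < n" and k: "k < n"
  shows "sqs (\<lambda>w. word_mat n A w $$ (i,k))"
proof -
  from min have rep: "is_representation J p S n A B C" unfolding minimal_representation_def by auto
  from rep have A: "\<And>s. A s \<in> carrier_mat n n" and B: "\<And>j. j \<in> J \<Longrightarrow> B j \<in> carrier_vec n"
    and C: "C \<in> carrier_mat p n" and S: "\<And>j w. j \<in> J \<Longrightarrow> S j w = C *\<^sub>v (word_mat n A w *\<^sub>v B j)"
    unfolding is_representation_def by auto
  note W = word_mat_carrier[of A n, OF A]
  have step1: "sqs (Qf n A (Matrix.row (C * word_mat n A v) i0) (word_mat n A u *\<^sub>v B j))"
    if i0: "i0 < p" and j: "j \<in> J" for i0 j u v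
  proof -
    have eq: "Qf n A (Matrix.row (C * word_mat n A v) i0) (word_mat n A u *\<^sub>v B j) w = S j (u @ w @ v) $ i0" for w
    proof -
      have r: "Matrix.row (C * word_mat n A v) i0 \<in> carrier_vec n" using row_carrier[of "C * word_mat n A v" i0] C W[of v] by simp
      have "Qf n A (Matrix.row (C * word_mat n A v) i0) (word_mat n A u *\<^sub>v B j) w
        = Matrix.row (C * word_mat n A v) i0 \<bullet> (word_mat n A w *\<^sub>v (word_mat n A u *\<^sub>v B j))"
        by (rule Qf_scalar[OF A r], insert W[of u] B[OF j], auto)
      also have "\<dots> = ((C * word_mat n A v) *\<^sub>v (word_mat n A w *\<^sub>v (word_mat n A u *\<^sub>v B j))) $ i0"
        by (rule index_mult_mat_vec[symmetric], insert i0 C W[of v], simp)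
      also have "(C * word_mat n A v) *\<^sub>v (word_mat n A w *\<^sub>v (word_mat n A u *\<^sub>v B j))
          = C *\<^sub>v (word_mat n A v *\<^sub>v (word_mat n A w *\<^sub>v (word_mat n A u *\<^sub>v B j)))"
        using C W[of v] W[of w] W[of u] B[OF j] by (simp add: assoc_mult_mat_vec)
      also have "\<dots> = S j (u @ w @ v)" unfolding S[OF j]
        unfolding word_mat_append[of A n, OF A]
        using C W[of v] W[of w] W[of u] B[OF j]
          assoc_mult_mat_vec[of "word_mat n A v" n n "word_mat n A w * word_mat n A u" n "B j"]
          assoc_mult_mat_vec[of "word_mat n A w" n n "word_mat n A u" n "B j"]
        by (simp add: assoc_mult_mat_vec)
      finally show ?thesis .
    qed
    define h where "h w = u @ w @ v" for w
    have inj: "inj h" unfolding h_def inj_def by auto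
    have "(\<lambda>w. sq_norm2 (S j w)) summable_on UNIV" using ss j unfolding square_summable_def by auto
    hence "(\<lambda>w. sq_norm2 (S j w)) summable_on range h" by (rule summable_on_subset_banach, auto)
    hence sm: "(\<lambda>w. sq_norm2 (S j (u @ w @ v))) summable_on UNIV"
      using summable_on_reindex[OF inj_on_subset[OF inj], of UNIV "\<lambda>w. sq_norm2 (S j w)"]
      unfolding h_def o_def by auto
    have "sqs (\<lambda>w. S j (u @ w @ v) $ i0)"
    proof (rule summable_on_comparison_test[OF sm])
      fix w
      have d: "dim_vec (S j (u @ w @ v)) = p" using S[OF j] C by simp
      show "(S j (u @ w @ v) $ i0)\<^sup>2 \<le> sq_norm2 (S j (u @ w @ v))"
        unfolding sq_norm2_def d using i0
        by (intro member_le_sum[of i0 "{..<p}" "\<lambda>i. (S j (u @ w @ v) $ i)\<^sup>2"], auto)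
    qed auto
    thus ?thesis using eq by simp
  qed
  have step2: "sqs (Qf n A (Matrix.row (C * word_mat n A v) i0) y)"
    if i0: "i0 < p" and y: "y \<in> carrier_vec n" for i0 v y
  proof -
    from min_reach[OF min y] obtain F a where F: "finite F"
      and FX: "F \<subseteq> {word_mat n A u *\<^sub>v B j | u j. j \<in> J}"
      and ye: "\<forall>l<n. y $ l = (\<Sum>v\<in>F. a v * v $ l)" by blast
    have "sqs (\<lambda>w. \<Sum>z\<in>F. a z * Qf n A (Matrix.row (C * word_mat n A v) i0) z w)"
    proof (rule sqs_lin[OF F])
      fix z assume "z \<in> F"
      with FX obtain u j where "j \<in> J" "z = word_mat n A u *\<^sub>v B j" by blast
      thus "sqs (Qf n A (Matrix.row (C * word_mat n A v) i0) z)" using step1[OF i0] by simp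
    qed
    moreover have "Qf n A (Matrix.row (C * word_mat n A v) i0) y = (\<lambda>w. \<Sum>z\<in>F. a z * Qf n A (Matrix.row (C * word_mat n A v) i0) z w)"
      by (rule ext, rule Qf_lin_right[OF ye])
    ultimately show ?thesis by simp
  qed
  have step3: "sqs (Qf n A x y)" if x: "x \<in> carrier_vec n" and y: "y \<in> carrier_vec n" for x y
  proof -
    from min_obs[OF min x] obtain F a where F: "finite F"
      and FX: "F \<subseteq> {Matrix.row (C * word_mat n A v) i | v i. i < p}"
      and xe: "\<forall>l<n. x $ l = (\<Sum>v\<in>F. a v * v $ l)" by blast
    have "sqs (\<lambda>w. \<Sum>z\<in>F. a z * Qf n A z y w)"
    proof (rule sqs_lin[OF F])
      fix z assume "z \<in> F"
      with FX obtain v i0 where "i0 < p" "z = Matrix.row (C * word_mat n A v) i0" by blast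
      thus "sqs (Qf n A z y)" using step2[OF _ y] by simp
    qed
    moreover have "Qf n A x y = (\<lambda>w. \<Sum>z\<in>F. a z * Qf n A z y w)"
      by (rule ext, rule Qf_lin_left[OF xe])
    ultimately show ?thesis by simp
  qed
  have "Qf n A (unit_vec n i) (unit_vec n k) = (\<lambda>w. word_mat n A w $$ (i,k))"
    by (rule ext, rule Qf_unit[OF i k])
  with step3[of "unit_vec n i" "unit_vec n k"] show ?thesis by simp
qed





lemma idx_lt: "a < n \<Longrightarrow> b < n \<Longrightarrow> a * n + b < n * (n::nat)"
proof -
  assume a: "a < n" and b: "b < n"
  have "(a + 1) * n \<le> n * n" using a by (intro mult_right_mono, auto)
  thus ?thesis using b by (simp add: algebra_simps)
qed

lemma idx_div: "b < n \<Longrightarrow> (a * n + b) div n = (a::nat)" by simp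
lemma idx_mod: "b < n \<Longrightarrow> (a * n + b) mod n = (b::nat)" by simp

lemma idx_eq: "b < n \<Longrightarrow> d < n \<Longrightarrow> (a * n + b = c * n + (d::nat)) = (a = c \<and> b = d)"
  by (metis idx_div idx_mod)

lemma sum_shift_lt: "(\<Sum>t<n. f (k + t)) = sum f {k..<k + (n::nat)}"
  by (induct n, auto)

lemma sum_pairs: "(\<Sum>t<n*n. f t) = (\<Sum>t1<n. \<Sum>t2<n. f (t1 * n + (t2::nat)))"
  by (simp add: sum.nat_group[symmetric] sum_shift_lt)

lemma finite_len: "finite {w :: 'a :: finite list. length w = k}"
  using finite_lists_length_eq[of "UNIV :: 'a set" k] by simp

lemma len_Suc_image: "{w :: 'a list. length w = Suc k} = (\<lambda>(w,s). w @ [s]) ` ({w. length w = k} \<times> UNIV)"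
proof (intro equalityI subsetI)
  fix x :: "'a list" assume "x \<in> {w. length w = Suc k}"
  hence x: "length x = Suc k" by auto
  hence "x = butlast x @ [last x]" by (metis append_butlast_last_id list.size(3) nat.distinct(1))
  moreover have "length (butlast x) = k" using x by simp
  ultimately show "x \<in> (\<lambda>(w,s). w @ [s]) ` ({w. length w = k} \<times> UNIV)" by force
qed auto

lemma stab_entry:
  assumes A: "\<And>s. A s \<in> carrier_mat n n" and a: "a < n" "b < n" and c: "c < n" "d < n"
  shows "stab_mat n A $$ (a * n + b, c * n + d) = (\<Sum>s\<in>UNIV. A s $$ (c,a) * A s $$ (d,b))"
proof -
  have r: "a * n + b < n * n" "c * n + d < n * n" using idx_lt a c by auto
  show ?thesis unfolding stab_mat_def using r
    apply (simp add: kron_def)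
    apply (intro sum.cong refl)
    subgoal for s using A[of s] a c r by (simp add: idx_div idx_mod)
    done
qed

lemma stab_pow:
  assumes A: "\<And>s. A s \<in> carrier_mat n n" and a: "a < n" "b < n"
  shows "c < n \<Longrightarrow> d < n \<Longrightarrow> (stab_mat n A ^\<^sub>m k) $$ (a * n + b, c * n + d)
     = (\<Sum>w\<in>{w. length w = k}. word_mat n A w $$ (c,a) * word_mat n A w $$ (d,b))"
proof (induct k arbitrary: c d)
  case 0
  have r: "a * n + b < n * n" "c * n + d < n * n" using idx_lt a 0 by auto
  have e: "{w :: 'a list. length w = 0} = {[]}" by auto
  show ?case using r a 0 unfolding e by (simp add: stab_mat_def idx_eq)
next
  case (Suc k c d)
  define M where "M = stab_mat n A"
  define W where "W = word_mat n A"
  have M: "M \<in> carrier_mat (n*n) (n*n)" unfolding M_def stab_mat_def by auto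
  have r: "a * n + b < n * n" "c * n + d < n * n" using idx_lt a Suc by auto
  have "(M ^\<^sub>m Suc k) $$ (a * n + b, c * n + d) = (\<Sum>t<n*n. (M ^\<^sub>m k) $$ (a*n+b, t) * M $$ (t, c*n+d))"
    using M r by (simp add: scalar_prod_def atLeast0LessThan)
  also have "\<dots> = (\<Sum>t1<n. \<Sum>t2<n. (M ^\<^sub>m k) $$ (a*n+b, t1*n+t2) * M $$ (t1*n+t2, c*n+d))"
    by (rule sum_pairs)
  also have "\<dots> = (\<Sum>t1<n. \<Sum>t2<n. (\<Sum>w\<in>{w. length w = k}. W w $$ (t1,a) * W w $$ (t2,b)) * (\<Sum>s\<in>UNIV. A s $$ (c,t1) * A s $$ (d,t2)))"
  proof (intro sum.cong refl)
    fix t1 t2 assume t: "t1 \<in> {..<n}" "t2 \<in> {..<n}"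
    show "(M ^\<^sub>m k) $$ (a*n+b, t1*n+t2) * M $$ (t1*n+t2, c*n+d) = (\<Sum>w\<in>{w. length w = k}. W w $$ (t1,a) * W w $$ (t2,b)) * (\<Sum>s\<in>UNIV. A s $$ (c,t1) * A s $$ (d,t2))"
      unfolding M_def W_def using Suc(1)[of t1 t2] stab_entry[of A n t1 t2 c d, OF A] t Suc(2,3) by auto
  qed
  also have "\<dots> = (\<Sum>t1<n. \<Sum>t2<n. \<Sum>w\<in>{w. length w = k}. \<Sum>s\<in>UNIV. (A s $$ (c,t1) * W w $$ (t1,a)) * (A s $$ (d,t2) * W w $$ (t2,b)))"
    by (simp add: sum_distrib_left sum_distrib_right mult_ac)
  also have "\<dots> = (\<Sum>t1<n. \<Sum>w\<in>{w. length w = k}. \<Sum>t2<n. \<Sum>s\<in>UNIV. (A s $$ (c,t1) * W w $$ (t1,a)) * (A s $$ (d,t2) * W w $$ (t2,b)))"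
    by (intro sum.cong refl, rule sum.swap)
  also have "\<dots> = (\<Sum>w\<in>{w. length w = k}. \<Sum>t1<n. \<Sum>t2<n. \<Sum>s\<in>UNIV. (A s $$ (c,t1) * W w $$ (t1,a)) * (A s $$ (d,t2) * W w $$ (t2,b)))"
    by (rule sum.swap)
  also have "\<dots> = (\<Sum>w\<in>{w. length w = k}. \<Sum>t1<n. \<Sum>s\<in>UNIV. \<Sum>t2<n. (A s $$ (c,t1) * W w $$ (t1,a)) * (A s $$ (d,t2) * W w $$ (t2,b)))"
    by (intro sum.cong refl, rule sum.swap)
  also have "\<dots> = (\<Sum>w\<in>{w. length w = k}. \<Sum>s\<in>UNIV. \<Sum>t1<n. \<Sum>t2<n. (A s $$ (c,t1) * W w $$ (t1,a)) * (A s $$ (d,t2) * W w $$ (t2,b)))"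
    by (intro sum.cong refl, rule sum.swap)
  also have "\<dots> = (\<Sum>w\<in>{w. length w = k}. \<Sum>s\<in>UNIV. (A s * W w) $$ (c,a) * (A s * W w) $$ (d,b))"
  proof (intro sum.cong refl)
    fix w s
    have Ww: "W w \<in> carrier_mat n n" unfolding W_def using word_mat_carrier[of A n, OF A] .
    have "(A s * W w) $$ (c,a) = (\<Sum>t1<n. A s $$ (c,t1) * W w $$ (t1,a))"
      using A[of s] Ww a Suc(2) by (simp add: scalar_prod_def atLeast0LessThan)
    moreover have "(A s * W w) $$ (d,b) = (\<Sum>t2<n. A s $$ (d,t2) * W w $$ (t2,b))"
      using A[of s] Ww a Suc(3) by (simp add: scalar_prod_def atLeast0LessThan)
    ultimately show "(\<Sum>t1<n. \<Sum>t2<n. (A s $$ (c,t1) * W w $$ (t1,a)) * (A s $$ (d,t2) * W w $$ (t2,b)))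
       = (A s * W w) $$ (c,a) * (A s * W w) $$ (d,b)"
      by (simp add: sum_product)
  qed
  also have "\<dots> = (\<Sum>w\<in>{w. length w = k}. \<Sum>s\<in>UNIV. W (w @ [s]) $$ (c,a) * W (w @ [s]) $$ (d,b))"
    unfolding W_def using word_mat_snoc[of A n, OF A] by simp
  also have "\<dots> = (\<Sum>ws\<in>{w. length w = k} \<times> UNIV. W (fst ws @ [snd ws]) $$ (c,a) * W (fst ws @ [snd ws]) $$ (d,b))"
    by (subst sum.cartesian_product, simp add: case_prod_beta)
  also have "\<dots> = (\<Sum>w\<in>{w. length w = Suc k}. W w $$ (c,a) * W w $$ (d,b))"
    unfolding len_Suc_image
    by (subst sum.reindex, auto simp: inj_on_def case_prod_beta)
  finally show ?case unfolding M_def W_def by simp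
qed





lemma sum_len_lt: "sum g {w :: 'a :: finite list. length w < K} = (\<Sum>k<K. sum g {w. length w = k})"
proof (induct K)
  case 0 thus ?case by simp
next
  case (Suc K)
  have e: "{w :: 'a list. length w < Suc K} = {w. length w < K} \<union> {w. length w = K}" by auto
  have f: "finite {w :: 'a list. length w < K}"
    using finite_lists_length_le[of "UNIV :: 'a set" K] by (rule finite_subset[rotated], auto)
  show ?case unfolding e using Suc f finite_len[of K]
    by (subst sum.union_disjoint, auto)
qed

lemma len_sum_tendsto_0:
  assumes sm: "g summable_on (UNIV :: 'a :: finite list set)" and nn: "\<And>w. g w \<ge> (0::real)"
  shows "(\<lambda>k. sum g {w. length w = k}) \<longlonglongrightarrow> 0"
proof -
  have "summable (\<lambda>k. sum g {w. length w = k})"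
  proof (rule summableI_nonneg_bounded)
    show "0 \<le> sum g {w. length w = k}" for k using nn by (simp add: sum_nonneg)
    fix K
    have f: "finite {w :: 'a list. length w < K}"
      using finite_lists_length_le[of "UNIV :: 'a set" K] by (rule finite_subset[rotated], auto)
    have "(\<Sum>k<K. sum g {w. length w = k}) = sum g {w. length w < K}" by (rule sum_len_lt[symmetric])
    also have "\<dots> \<le> infsum g UNIV" using sm f nn by (intro finite_sum_le_infsum, auto)
    finally show "(\<Sum>k<K. sum g {w. length w = k}) \<le> infsum g UNIV" .
  qed
  thus ?thesis by (rule summable_LIMSEQ_zero)
qed

lemma abs_xy_le: "\<bar>(x::real) * y\<bar> \<le> (x\<^sup>2 + y\<^sup>2) / 2"
proof -
  have "(\<bar>x\<bar> - \<bar>y\<bar>)\<^sup>2 = x\<^sup>2 + y\<^sup>2 - 2 * \<bar>x * y\<bar>"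
    by (simp add: power2_eq_square abs_mult algebra_simps)
  moreover have "0 \<le> (\<bar>x\<bar> - \<bar>y\<bar>)\<^sup>2" by simp
  ultimately have "2 * \<bar>x * y\<bar> \<le> x\<^sup>2 + y\<^sup>2" by linarith
  thus ?thesis by simp
qed

lemma pow_entry_tendsto_0:
  assumes min: "minimal_representation J p S n A B C" and ss: "square_summable J S"
  and r: "r < n * n" and c: "c < n * n"
  shows "(\<lambda>k. (stab_mat n A ^\<^sub>m k) $$ (r, c)) \<longlonglongrightarrow> 0"
proof -
  from min have A: "\<And>s. A s \<in> carrier_mat n n" unfolding minimal_representation_def is_representation_def by auto
  define g where "g w = (\<Sum>i<n. \<Sum>k<n. (word_mat n A w $$ (i,k))\<^sup>2)" for w
  have gs: "g summable_on UNIV" unfolding g_def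
    by (intro sum_summable_on, auto intro: min_summable[OF min ss])
  have gn: "g w \<ge> 0" for w unfolding g_def by (intro sum_nonneg, auto)
  have gle: "(word_mat n A w $$ (i,k))\<^sup>2 \<le> g w" if "i < n" "k < n" for i k w
  proof -
    have "(word_mat n A w $$ (i,k))\<^sup>2 \<le> (\<Sum>k<n. (word_mat n A w $$ (i,k))\<^sup>2)"
      by (rule member_le_sum, insert that, auto)
    also have "\<dots> \<le> g w" unfolding g_def
      by (rule member_le_sum[of i "{..<n}" "\<lambda>i. \<Sum>k<n. (word_mat n A w $$ (i,k))\<^sup>2"], insert that, auto intro: sum_nonneg)
    finally show ?thesis .
  qed
  have n: "n > 0" using r by (cases n, auto)
  define a where "a = r div n" define b where "b = r mod n"
  define c1 where "c1 = c div n" define d where "d = c mod n"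
  have ab: "a < n" "b < n" "c1 < n" "d < n" using r c n unfolding a_def b_def c1_def d_def
    by (auto simp: less_mult_imp_div_less)
  have re: "r = a * n + b" "c = c1 * n + d" unfolding a_def b_def c1_def d_def by auto
  have entry: "(stab_mat n A ^\<^sub>m k) $$ (r, c) = (\<Sum>w\<in>{w. length w = k}. word_mat n A w $$ (c1,a) * word_mat n A w $$ (d,b))" for k
    unfolding re by (rule stab_pow[OF A ab])
  show ?thesis
  proof (rule Lim_null_comparison[OF _ len_sum_tendsto_0[OF gs gn]])
    show "\<forall>\<^sub>F k in sequentially. norm ((stab_mat n A ^\<^sub>m k) $$ (r, c)) \<le> sum g {w. length w = k}"
    proof (rule always_eventually, rule allI)
      fix k
      have "norm ((stab_mat n A ^\<^sub>m k) $$ (r, c)) \<le> (\<Sum>w\<in>{w. length w = k}. \<bar>word_mat n A w $$ (c1,a) * word_mat n A w $$ (d,b)\<bar>)"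
        unfolding entry real_norm_def by (rule sum_abs)
      also have "\<dots> \<le> sum g {w. length w = k}"
      proof (rule sum_mono)
        fix w
        let ?x = "word_mat n A w $$ (c1,a)" and ?y = "word_mat n A w $$ (d,b)"
        have "\<bar>?x * ?y\<bar> \<le> (?x\<^sup>2 + ?y\<^sup>2) / 2" by (rule abs_xy_le)
        also have "\<dots> \<le> g w" using gle[of c1 a w] gle[of d b w] ab by auto
        finally show "\<bar>?x * ?y\<bar> \<le> g w" .
      qed
      finally show "norm ((stab_mat n A ^\<^sub>m k) $$ (r, c)) \<le> sum g {w. length w = k}" .
    qed
  qed
qed


lemma entries_to_stable:
  fixes A :: "'a :: finite \<Rightarrow> real mat"
  assumes A: "\<And>s. A s \<in> carrier_mat n n"
  and lim: "\<And>r c. r < n * n \<Longrightarrow> c < n * n \<Longrightarrow> (\<lambda>k. (stab_mat n A ^\<^sub>m k) $$ (r, c)) \<longlonglongrightarrow> 0"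
  shows "stable_rep n A"
  unfolding stable_rep_def
proof (intro allI impI)
  fix ev :: complex
  define M where "M = stab_mat n A"
  define Mc where "Mc = map_mat complex_of_real M"
  have M: "M \<in> carrier_mat (n*n) (n*n)" unfolding M_def stab_mat_def by auto
  have Mc: "Mc \<in> carrier_mat (n*n) (n*n)" unfolding Mc_def using M by auto
  assume "eigenvalue (map_mat complex_of_real (stab_mat n A)) ev"
  then obtain v where ev: "eigenvector Mc v ev" unfolding eigenvalue_def Mc_def M_def by auto
  from ev Mc have v: "v \<in> carrier_vec (n*n)" and v0: "v \<noteq> 0\<^sub>v (n*n)" unfolding eigenvector_def by auto
  from v v0 obtain i where i: "i < n * n" and vi: "v $ i \<noteq> 0"
    by (metis carrier_vecD eq_vecI index_zero_vec(1) index_zero_vec(2))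
  have pw: "Mc ^\<^sub>m k = map_mat complex_of_real (M ^\<^sub>m k)" for k
    unfolding Mc_def by (rule of_real_hom.mat_hom_pow[OF M, symmetric])
  have "(\<lambda>k. (Mc ^\<^sub>m k *\<^sub>v v) $ i) \<longlonglongrightarrow> 0"
  proof -
    have e: "(Mc ^\<^sub>m k *\<^sub>v v) $ i = (\<Sum>l<n*n. complex_of_real ((M ^\<^sub>m k) $$ (i,l)) * v $ l)" for k
      unfolding pw using M v i by (simp add: scalar_prod_def atLeast0LessThan)
    have "(\<lambda>k. \<Sum>l<n*n. complex_of_real ((M ^\<^sub>m k) $$ (i,l)) * v $ l) \<longlonglongrightarrow> (\<Sum>l<n*n. 0)"
    proof (rule tendsto_sum)
      fix l assume "l \<in> {..<n*n}"
      hence "(\<lambda>k. (M ^\<^sub>m k) $$ (i,l)) \<longlonglongrightarrow> 0" using lim[OF i] unfolding M_def by auto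
      hence "(\<lambda>k. complex_of_real ((M ^\<^sub>m k) $$ (i,l))) \<longlonglongrightarrow> complex_of_real 0" by (rule tendsto_of_real)
      thus "(\<lambda>k. complex_of_real ((M ^\<^sub>m k) $$ (i,l)) * v $ l) \<longlonglongrightarrow> 0"
        using tendsto_mult_left_zero by auto
    qed
    thus ?thesis unfolding e by simp
  qed
  moreover have "(Mc ^\<^sub>m k *\<^sub>v v) $ i = ev ^ k * v $ i" for k
    using eigenvector_pow[OF Mc ev] i v by simp
  ultimately have "(\<lambda>k. ev ^ k * v $ i) \<longlonglongrightarrow> 0" by simp
  hence "(\<lambda>k. (ev ^ k * v $ i) * inverse (v $ i)) \<longlonglongrightarrow> 0" by (rule tendsto_mult_left_zero)
  hence "(\<lambda>k. ev ^ k) \<longlonglongrightarrow> 0" using vi by simp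
  hence "(\<lambda>k. norm (ev ^ k)) \<longlonglongrightarrow> 0" by (rule tendsto_norm_zero)
  hence "\<forall>\<^sub>F k in sequentially. norm (ev ^ k) < 1" by (rule order_tendstoD(2), simp)
  then obtain k where "norm (ev ^ k) < 1" by (meson eventually_sequentially order_refl)
  thus "cmod ev < 1" by (metis norm_power one_le_power not_le)
qed





lemma smult_pow_mat: assumes A: "(A :: 'b :: comm_ring_1 mat) \<in> carrier_mat n n"
  shows "(a \<cdot>\<^sub>m A) ^\<^sub>m k = a ^ k \<cdot>\<^sub>m (A ^\<^sub>m k)"
proof (induct k)
  case 0 thus ?case using A by (auto intro!: eq_matI)
next
  case (Suc k)
  have Ak: "A ^\<^sub>m k \<in> carrier_mat n n" using A by simp
  have "(a \<cdot>\<^sub>m A) ^\<^sub>m Suc k = (a ^ k \<cdot>\<^sub>m (A ^\<^sub>m k)) * (a \<cdot>\<^sub>m A)" using Suc by simp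
  also have "\<dots> = a ^ k \<cdot>\<^sub>m ((A ^\<^sub>m k) * (a \<cdot>\<^sub>m A))"
    using mult_smult_assoc_mat[of "A ^\<^sub>m k" n n "a \<cdot>\<^sub>m A" n "a ^ k"] Ak A by simp
  also have "\<dots> = a ^ k \<cdot>\<^sub>m (a \<cdot>\<^sub>m ((A ^\<^sub>m k) * A))"
    using mult_smult_distrib[of "A ^\<^sub>m k" n n A n a] Ak A by simp
  also have "\<dots> = a ^ Suc k \<cdot>\<^sub>m (A ^\<^sub>m Suc k)" by (rule eq_matI, auto simp: mult.assoc)
  finally show ?case .
qed

lemma smult_mat_vec: "A \<in> carrier_mat n m \<Longrightarrow> v \<in> carrier_vec m \<Longrightarrow> (a \<cdot>\<^sub>m A) *\<^sub>v v = a \<cdot>\<^sub>v (A *\<^sub>v (v :: 'b :: comm_ring_1 vec))"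
  by (rule eq_vecI, auto simp: scalar_prod_def sum_distrib_left mult.assoc)

lemma stable_bound:
  fixes A :: "'a :: finite \<Rightarrow> real mat"
  assumes st: "stable_rep n A"
  shows "\<exists>K \<rho>. 0 \<le> \<rho> \<and> \<rho> < 1 \<and> (\<forall>k r c. r < n * n \<longrightarrow> c < n * n \<longrightarrow> \<bar>(stab_mat n A ^\<^sub>m k) $$ (r, c)\<bar> \<le> K * \<rho> ^ k)"
proof (cases "n = 0")
  case True thus ?thesis by (intro exI[of _ 0] exI[of _ 0], auto)
next
  case False
  hence N: "n * n > 0" by auto
  define M where "M = stab_mat n A"
  define Mc where "Mc = map_mat complex_of_real M"
  have M: "M \<in> carrier_mat (n*n) (n*n)" unfolding M_def stab_mat_def by auto
  have Mc: "Mc \<in> carrier_mat (n*n) (n*n)" unfolding Mc_def using M by auto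
  define sr where "sr = spectral_radius Mc"
  from spectral_radius_mem_max(1)[OF Mc N] obtain mu where mu: "mu \<in> spectrum Mc" and srmu: "sr = norm mu"
    unfolding sr_def by auto
  from mu st have sr1: "sr < 1" unfolding srmu spectrum_def stable_rep_def Mc_def M_def by auto
  have sr0: "sr \<ge> 0" unfolding srmu by simp
  define \<rho> where "\<rho> = (sr + 1) / 2"
  have \<rho>: "0 < \<rho>" "\<rho> < 1" "sr < \<rho>" using sr0 sr1 unfolding \<rho>_def by auto
  define Mp where "Mp = complex_of_real (1 / \<rho>) \<cdot>\<^sub>m Mc"
  have Mp: "Mp \<in> carrier_mat (n*n) (n*n)" unfolding Mp_def using Mc by auto
  have "spectral_radius Mp < 1"
  proof -
    from spectral_radius_mem_max(1)[OF Mp N] obtain nu where nu: "nu \<in> spectrum Mp"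
      and e: "spectral_radius Mp = norm nu" by auto
    from nu obtain w where ew: "eigenvector Mp w nu" unfolding spectrum_def eigenvalue_def by auto
    hence w: "w \<in> carrier_vec (n*n)" "w \<noteq> 0\<^sub>v (n*n)" and Mw: "Mp *\<^sub>v w = nu \<cdot>\<^sub>v w"
      using Mp unfolding eigenvector_def by auto
    have "Mc *\<^sub>v w = complex_of_real \<rho> \<cdot>\<^sub>v (Mp *\<^sub>v w)"
      unfolding Mp_def using smult_mat_vec[OF Mc w(1)] \<rho> Mc w(1) by (auto simp: smult_smult_assoc)
    also have "\<dots> = (complex_of_real \<rho> * nu) \<cdot>\<^sub>v w" unfolding Mw by (simp add: smult_smult_assoc)
    finally have "eigenvector Mc w (complex_of_real \<rho> * nu)" unfolding eigenvector_def using w Mc by auto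
    hence "norm (complex_of_real \<rho> * nu) \<in> norm ` spectrum Mc" unfolding spectrum_def eigenvalue_def by auto
    from spectral_radius_mem_max(2)[OF Mc N this] have "\<rho> * norm nu \<le> sr"
      unfolding sr_def using \<rho> by (simp add: norm_mult)
    hence "\<rho> * norm nu < \<rho> * 1" using \<rho> by linarith
    hence "norm nu < 1" using \<rho>(1) mult_less_cancel_left_pos by blast
    thus ?thesis unfolding e .
  qed
  from spectral_radius_jnf_norm_bound_less_1_upper_triangular[OF Mp this] obtain cc where
    cc: "\<And>k. norm_bound (Mp ^\<^sub>m k) cc" by auto
  show ?thesis
  proof (rule exI[of _ cc], rule exI[of _ \<rho>], intro conjI allI impI)
    show "0 \<le> \<rho>" "\<rho> < 1" using \<rho> by auto
    fix k r c assume r: "r < n * n" and c: "c < n * n"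
    have "Mp ^\<^sub>m k = complex_of_real (1 / \<rho>) ^ k \<cdot>\<^sub>m (Mc ^\<^sub>m k)"
      unfolding Mp_def by (rule smult_pow_mat[OF Mc])
    also have "Mc ^\<^sub>m k = map_mat complex_of_real (M ^\<^sub>m k)"
      unfolding Mc_def by (rule of_real_hom.mat_hom_pow[OF M, symmetric])
    finally have "(Mp ^\<^sub>m k) $$ (r, c) = complex_of_real ((1 / \<rho>) ^ k * (M ^\<^sub>m k) $$ (r, c))"
      using M r c by simp
    with cc[of k] r c Mp have "norm (complex_of_real ((1 / \<rho>) ^ k * (M ^\<^sub>m k) $$ (r, c))) \<le> cc"
      unfolding norm_bound_def by (metis carrier_matD pow_mat_dim_square)
    hence "\<bar>(1 / \<rho>) ^ k * (M ^\<^sub>m k) $$ (r, c)\<bar> \<le> cc" by (simp only: norm_of_real)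
    hence "(1 / \<rho>) ^ k * \<bar>(M ^\<^sub>m k) $$ (r, c)\<bar> \<le> cc" using \<rho> by (simp add: abs_mult)
    hence "\<bar>(M ^\<^sub>m k) $$ (r, c)\<bar> \<le> cc * \<rho> ^ k" using \<rho>
      by (simp add: field_simps power_divide)
    thus "\<bar>(stab_mat n A ^\<^sub>m k) $$ (r, c)\<bar> \<le> cc * \<rho> ^ k" unfolding M_def .
  qed
qed


lemma sq_norm_expand:
  assumes C: "C \<in> carrier_mat p n" and W: "W \<in> carrier_mat n n" and B: "B \<in> carrier_vec n"
  shows "sq_norm2 (C *\<^sub>v (W *\<^sub>v B)) = (\<Sum>i<p. \<Sum>a<n. \<Sum>b<n. \<Sum>c<n. \<Sum>d<n.
     (C $$ (i,a) * B $ c * C $$ (i,b) * B $ d) * (W $$ (a,c) * W $$ (b,d)))"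
proof -
  have x: "(C *\<^sub>v (W *\<^sub>v B)) $ i = (\<Sum>a<n. \<Sum>c<n. C $$ (i,a) * W $$ (a,c) * B $ c)" if "i < p" for i
    using C W B that by (simp add: scalar_prod_def atLeast0LessThan sum_distrib_left mult.assoc)
  have d: "dim_vec (C *\<^sub>v (W *\<^sub>v B)) = p" using C by simp
  show ?thesis unfolding sq_norm2_def d
  proof (rule sum.cong[OF refl])
    fix i assume "i \<in> {..<p}"
    hence i: "i < p" by auto
    show "((C *\<^sub>v (W *\<^sub>v B)) $ i)\<^sup>2 = (\<Sum>a<n. \<Sum>b<n. \<Sum>c<n. \<Sum>d<n.
     (C $$ (i,a) * B $ c * C $$ (i,b) * B $ d) * (W $$ (a,c) * W $$ (b,d)))"
      unfolding x[OF i] power2_eq_square sum_product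
      by (intro sum.cong refl, simp add: sum_product mult_ac)
  qed
qed

lemma nested_abs_le:
  assumes "\<And>i a b c d. i < p \<Longrightarrow> a < n \<Longrightarrow> b < n \<Longrightarrow> c < n \<Longrightarrow> d < n \<Longrightarrow> \<bar>f i a b c d\<bar> \<le> (g i a b c d :: real)"
  shows "\<bar>\<Sum>i<p. \<Sum>a<n. \<Sum>b<n. \<Sum>c<n. \<Sum>d<n. f i a b c d\<bar> \<le> (\<Sum>i<p. \<Sum>a<n. \<Sum>b<n. \<Sum>c<n. \<Sum>d<n. g i a b c d)"
  apply (rule order.trans[OF sum_abs], rule sum_mono)+
  using assms by auto

lemma stable_summable:
  fixes A :: "'a :: finite \<Rightarrow> real mat"
  assumes rep: "is_representation J p S n A B C" and st: "stable_rep n A" and j: "j \<in> J"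
  shows "(\<lambda>w. sq_norm2 (S j w)) summable_on UNIV"
proof -
  from rep have A: "\<And>s. A s \<in> carrier_mat n n" and Bj: "B j \<in> carrier_vec n"
    and C: "C \<in> carrier_mat p n" and S: "\<And>w. S j w = C *\<^sub>v (word_mat n A w *\<^sub>v B j)"
    using j unfolding is_representation_def by auto
  note W = word_mat_carrier[of A n, OF A]
  from stable_bound[OF st] obtain K \<rho> where \<rho>: "0 \<le> \<rho>" "\<rho> < 1"
    and bnd: "\<And>k r c. r < n * n \<Longrightarrow> c < n * n \<Longrightarrow> \<bar>(stab_mat n A ^\<^sub>m k) $$ (r, c)\<bar> \<le> K * \<rho> ^ k" by blast
  define f where "f w = sq_norm2 (S j w)" for w
  define co where "co i a b c d = C $$ (i,a) * B j $ c * C $$ (i,b) * B j $ d" for i a b c d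
  define L where "L = (\<Sum>i<p. \<Sum>a<n. \<Sum>b<n. \<Sum>c<n. \<Sum>d<n. \<bar>co i a b c d\<bar> * K)"
  have fnn: "f w \<ge> 0" for w unfolding f_def sq_norm2_def by (intro sum_nonneg, auto)
  have lenb: "sum f {w. length w = k} \<le> L * \<rho> ^ k" for k
  proof -
    have "sum f {w. length w = k} = (\<Sum>w\<in>{w. length w = k}. \<Sum>i<p. \<Sum>a<n. \<Sum>b<n. \<Sum>c<n. \<Sum>d<n.
         co i a b c d * (word_mat n A w $$ (a,c) * word_mat n A w $$ (b,d)))"
      unfolding f_def S co_def using sq_norm_expand[OF C W Bj] by simp
    also have "\<dots> = (\<Sum>i<p. \<Sum>a<n. \<Sum>b<n. \<Sum>c<n. \<Sum>d<n. \<Sum>w\<in>{w. length w = k}.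
         co i a b c d * (word_mat n A w $$ (a,c) * word_mat n A w $$ (b,d)))"
      by (simp only: sum.swap[of _ "{w. length w = k}"])
    also have "\<dots> = (\<Sum>i<p. \<Sum>a<n. \<Sum>b<n. \<Sum>c<n. \<Sum>d<n.
         co i a b c d * (stab_mat n A ^\<^sub>m k) $$ (c * n + d, a * n + b))"
      by (intro sum.cong refl, simp add: sum_distrib_left[symmetric] stab_pow[OF A])
    also have "\<dots> \<le> \<bar>\<dots>\<bar>" by simp
    also have "\<dots> \<le> (\<Sum>i<p. \<Sum>a<n. \<Sum>b<n. \<Sum>c<n. \<Sum>d<n. \<bar>co i a b c d\<bar> * (K * \<rho> ^ k))"
    proof (rule nested_abs_le)
      fix i a b c d assume "i < p" "a < n" "b < n" "c < n" "d < n"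
      hence "\<bar>(stab_mat n A ^\<^sub>m k) $$ (c * n + d, a * n + b)\<bar> \<le> K * \<rho> ^ k"
        using idx_lt by (intro bnd, auto)
      thus "\<bar>co i a b c d * (stab_mat n A ^\<^sub>m k) $$ (c * n + d, a * n + b)\<bar> \<le> \<bar>co i a b c d\<bar> * (K * \<rho> ^ k)"
        by (simp add: abs_mult mult_left_mono)
    qed
    also have "\<dots> = L * \<rho> ^ k" unfolding L_def by (simp add: sum_distrib_right mult.assoc)
    finally show ?thesis .
  qed
  have "f [] \<le> L" using lenb[of 0] by simp
  hence L0: "L \<ge> 0" using fnn[of "[]"] by linarith
  have "f summable_on UNIV"
  proof (rule nonneg_bdd_above_summable_on)
    show "0 \<le> f w" for w by (rule fnn)
    show "bdd_above (sum f ` {F. F \<subseteq> UNIV \<and> finite F})"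
    proof (rule bdd_aboveI2)
      fix F :: "'a list set" assume "F \<in> {F. F \<subseteq> UNIV \<and> finite F}"
      hence F: "finite F" by auto
      define N where "N = Suc (\<Sum>w\<in>F. length w)"
      have FN: "F \<subseteq> {w. length w < N}"
      proof
        fix w assume "w \<in> F"
        hence "length w \<le> (\<Sum>w\<in>F. length w)" using F by (intro member_le_sum, auto)
        thus "w \<in> {w. length w < N}" unfolding N_def by auto
      qed
      have fN: "finite {w :: 'a list. length w < N}"
        using finite_lists_length_le[of "UNIV :: 'a set" N] by (rule finite_subset[rotated], auto)
      have "sum f F \<le> sum f {w. length w < N}" by (rule sum_mono2[OF fN FN], insert fnn, auto)
      also have "\<dots> = (\<Sum>k<N. sum f {w. length w = k})" by (rule sum_len_lt)
      also have "\<dots> \<le> (\<Sum>k<N. L * \<rho> ^ k)" by (rule sum_mono, rule lenb)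
      also have "\<dots> = L * ((1 - \<rho> ^ N) / (1 - \<rho>))" using \<rho> by (simp add: sum_distrib_left[symmetric] sum_gp_strict)
      also have "\<dots> \<le> L * (1 / (1 - \<rho>))" using \<rho> L0
        by (intro mult_left_mono divide_right_mono, auto)
      finally show "sum f F \<le> L * (1 / (1 - \<rho>))" .
    qed
  qed
  thus ?thesis unfolding f_def .
qed



theorem mainTheorem1:
  fixes J :: "'j set" and p :: nat and S :: "'j \<Rightarrow> ('a::finite) list \<Rightarrow> real vec"
  assumes "finite J"
  shows "((\<exists>n A B C. is_representation J p S n A B C \<and> stable_rep n A) \<longrightarrow> square_summable J S)
    \<and> (square_summable J S \<longrightarrow>
         (\<forall>n A B C. minimal_representation J p S n A B C \<longrightarrow> stable_rep n A))"
proof (intro conjI impI allI)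
  assume "\<exists>n A B C. is_representation J p S n A B C \<and> stable_rep n A"
  then obtain n A B C where rep: "is_representation J p S n A B C" and st: "stable_rep n A" by blast
  show "square_summable J S" unfolding square_summable_def
    using stable_summable[OF rep st] by blast
next
  fix n A B C
  assume ss: "square_summable J S" and min: "minimal_representation J p S n A B C"
  from min have A: "\<And>s. A s \<in> carrier_mat n n"
    unfolding minimal_representation_def is_representation_def by auto
  show "stable_rep n A"
    by (rule entries_to_stable[OF A pow_entry_tendsto_0[OF min ss]])
qed

end
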